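(* For $n\geq5$, \[\frac{\lceil (n-1)/2\rceil - \lfloor (n-1)/2\rfloor}{\lceil (n-1)/2\rceil} + \frac{\lfloor (n+1)/2\rfloor}{\lceil (n+1)/2\rceil}\leq \frac{\ell_{n}(n)}{\ell_{n-1}(n)}\leq \frac{n+1}{n}.\]
   Context: For $0\leq i\leq 2n$, $\ell_i(n)$ denotes the number of vectors in $\{0,1,2\}^n$ whose coordinates sum to $i$. *)

theory Defs
  imports Complex_Main "HOL-Library.FuncSet"
begin

definition ell :: "nat \<Rightarrow> nat \<Rightarrow> nat" where
  "ell i n = card {v \<in> {0..<n} \<rightarrow>\<^sub>E {0::nat, 1, 2}. (\<Sum>j<n. v j) = i}"

end

theory Submission imports Defs begin

definition A :: "nat \<Rightarrow> int \<Rightarrow> (nat\<Rightarrow>nat) set" where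
  "A n i = {v \<in> {0..<n} \<rightarrow>\<^sub>E {0::nat,1,2}. int (\<Sum>j<n. v j) = i}"

definition c :: "nat \<Rightarrow> int \<Rightarrow> int" where "c n i = int (card (A n i))"

lemma finA: "finite (A n i)"
  unfolding A_def by (rule finite_subset[OF _ finite_PiE[of "{0..<n}" "\<lambda>_. {0::nat,1,2}"]]) auto

lemma c0: "c 0 i = (if i = 0 then 1 else 0)"
  unfolding c_def A_def by (auto simp: PiE_empty_domain)

lemma slice:
  assumes a: "a \<in> {0::nat,1,2}"
  shows "{v \<in> A (Suc n) i. v n = a} = (\<lambda>g. g(n:=a)) ` A n (i - int a)"
proof
  show "{v \<in> A (Suc n) i. v n = a} \<subseteq> (\<lambda>g. g(n:=a)) ` A n (i - int a)"
  proof
    fix v assume v: "v \<in> {v \<in> A (Suc n) i. v n = a}"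
    have vP: "v \<in> {0..<Suc n} \<rightarrow>\<^sub>E {0::nat,1,2}" and vs: "int (\<Sum>j<Suc n. v j) = i" and vn: "v n = a"
      using v unfolding A_def by auto
    let ?g = "v(n:=undefined)"
    have vv: "v = ?g(n:=a)" using vn by (metis fun_upd_triv fun_upd_upd)
    have gP: "?g \<in> {0..<n} \<rightarrow>\<^sub>E {0::nat,1,2}"
      using vP unfolding PiE_iff extensional_def by auto
    have sg: "(\<Sum>j<n. ?g j) = (\<Sum>j<n. v j)" by (rule sum.cong) auto
    have "(\<Sum>j<Suc n. v j) = (\<Sum>j<n. v j) + a" using vn by simp
    then have "int (\<Sum>j<n. ?g j) = i - int a" using vs sg by simp
    then have "?g \<in> A n (i - int a)" using gP unfolding A_def by blast
    then show "v \<in> (\<lambda>g. g(n:=a)) ` A n (i - int a)" using vv by blast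
  qed
next
  show "(\<lambda>g. g(n:=a)) ` A n (i - int a) \<subseteq> {v \<in> A (Suc n) i. v n = a}"
  proof
    fix v assume "v \<in> (\<lambda>g. g(n:=a)) ` A n (i - int a)"
    then obtain g where g: "g \<in> A n (i - int a)" and v: "v = g(n:=a)" by blast
    have gP: "g \<in> {0..<n} \<rightarrow>\<^sub>E {0::nat,1,2}" and gs: "int (\<Sum>j<n. g j) = i - int a"
      using g unfolding A_def by auto
    have vP: "v \<in> {0..<Suc n} \<rightarrow>\<^sub>E {0::nat,1,2}"
      using gP a unfolding v PiE_iff extensional_def by auto
    have sg: "(\<Sum>j<n. v j) = (\<Sum>j<n. g j)" unfolding v by (rule sum.cong) auto
    have "(\<Sum>j<Suc n. v j) = (\<Sum>j<n. v j) + a" using v by simp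
    then have "int (\<Sum>j<Suc n. v j) = i" using gs sg by simp
    then show "v \<in> {v \<in> A (Suc n) i. v n = a}" using vP v unfolding A_def by simp
  qed
qed

lemma inj_upd:
  "inj_on (\<lambda>g. g(n:=a)) (A n k)"
proof (rule inj_onI)
  fix g h assume g: "g \<in> A n k" and h: "h \<in> A n k" and e: "g(n:=a) = h(n:=a)"
  have g': "g \<in> {0..<n} \<rightarrow>\<^sub>E {0::nat,1,2}" using g unfolding A_def by blast
  have h': "h \<in> {0..<n} \<rightarrow>\<^sub>E {0::nat,1,2}" using h unfolding A_def by blast
  have "g n = undefined" by (rule PiE_arb[OF g']) simp
  moreover have "h n = undefined" by (rule PiE_arb[OF h']) simp
  ultimately have "g n = h n" by simp
  then show "g = h" using e by (metis fun_upd_triv fun_upd_upd)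
qed

lemma card_slice: "a \<in> {0::nat,1,2} \<Longrightarrow> card {v \<in> A (Suc n) i. v n = a} = card (A n (i - int a))"
  by (simp add: slice card_image inj_upd)

lemma c_rec: "c (Suc n) i = c n i + c n (i-1) + c n (i-2)"
proof -
  have U: "A (Suc n) i = {v \<in> A (Suc n) i. v n = 0} \<union> {v \<in> A (Suc n) i. v n = 1} \<union> {v \<in> A (Suc n) i. v n = 2}"
    unfolding A_def by (auto simp: PiE_def Pi_def)
  have f: "finite {v \<in> A (Suc n) i. v n = a}" for a using finA by auto
  have "card (A (Suc n) i) = card {v \<in> A (Suc n) i. v n = 0} + card {v \<in> A (Suc n) i. v n = 1} + card {v \<in> A (Suc n) i. v n = 2}"
    apply (subst U)
    apply (subst card_Un_disjoint, use f in auto)+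
    done
  then show ?thesis unfolding c_def using card_slice[of 0 n i] card_slice[of 1 n i] card_slice[of 2 n i] by simp
qed

lemma aux: fixes i n a b d e f :: int
  assumes "(i+1)*a = (n-i)*b + (2*n-i+1)*d" "i*b = (n-(i-1))*d + (2*n-(i-1)+1)*e" "(i-1)*d = (n-(i-2))*e + (2*n-(i-2)+1)*f"
  shows "(i+1)*(a+b+d) = (n+1-i)*(b+d+e) + (2*(n+1)-i+1)*(d+e+f)"
proof -
  have "(i+1)*(a+b+d) - ((n+1-i)*(b+d+e) + (2*(n+1)-i+1)*(d+e+f)) =
    ((i+1)*a - ((n-i)*b + (2*n-i+1)*d)) + (i*b - ((n-(i-1))*d + (2*n-(i-1)+1)*e)) + ((i-1)*d - ((n-(i-2))*e + (2*n-(i-2)+1)*f))"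
    by (simp add: algebra_simps)
  then show ?thesis using assms by simp
qed

lemma B: "(i+1) * c n (i+1) = (int n - i) * c n i + (2*int n - i + 1) * c n (i-1)"
proof (induction n arbitrary: i)
  case 0
  then show ?case by (auto simp: c0)
next
  case (Suc n)
  have e1: "(i+1) * c n (i+1) = (int n - i) * c n i + (2*int n - i + 1) * c n (i-1)" by (rule Suc.IH)
  have e2: "i * c n i = (int n - (i-1)) * c n (i-1) + (2*int n - (i-1) + 1) * c n (i-2)"
    using Suc.IH[of "i-1"] by (simp add: algebra_simps)
  have e3: "(i-1) * c n (i-1) = (int n - (i-2)) * c n (i-2) + (2*int n - (i-2) + 1) * c n (i-3)"
    using Suc.IH[of "i-2"] by (simp add: algebra_simps)
  have r1: "c (Suc n) (i+1) = c n (i+1) + c n i + c n (i-1)" by (simp add: c_rec)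
  have r2: "c (Suc n) i = c n i + c n (i-1) + c n (i-2)" by (simp add: c_rec)
  have r3: "c (Suc n) (i-1) = c n (i-1) + c n (i-2) + c n (i-3)" by (simp add: c_rec)
  have X: "(i+1)*(c n (i+1) + c n i + c n (i-1)) = (int n+1-i)*(c n i + c n (i-1) + c n (i-2)) + (2*(int n+1)-i+1)*(c n (i-1) + c n (i-2) + c n (i-3))"
    by (rule aux[OF e1 e2 e3])
  have eq: "int (Suc n) = int n + 1" by simp
  show ?case unfolding r1 r2 r3 eq using X by argo
qed

definition T :: "nat \<Rightarrow> int" where "T n = c n (int n)"
definition S :: "nat \<Rightarrow> int" where "S n = c n (int n - 1)"

lemma T_Suc: "T (Suc n) = T n + 2 * S n"
proof -
  have "(int n+1) * c n (int n+1) = (int n - int n) * c n (int n) + (2*int n - int n + 1) * c n (int n - 1)"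
    using B[of "int n" n] .
  then have "(int n+1) * c n (int n+1) = (int n+1) * c n (int n - 1)" by (simp add: algebra_simps)
  then have "c n (int n+1) = c n (int n - 1)" by simp
  then have "c n (1 + int n) = c n (int n - 1)" by (simp add: add.commute)
  then show ?thesis unfolding T_def S_def by (simp add: c_rec)
qed

lemma S_Suc: "(int n + 2) * S (Suc n) = (int n + 1) * (2 * T n + S n)"
proof -
  have e: "int n * c n (int n) = (int n - (int n - 1)) * c n (int n - 1) + (2*int n - (int n - 1) + 1) * c n (int n - 1 - 1)"
    using B[of "int n - 1" n] by simp
  have r: "S (Suc n) = c n (int n) + c n (int n - 1) + c n (int n - 2)"
    unfolding S_def by (simp add: c_rec)
  have e': "int n * c n (int n) = c n (int n - 1) + (int n + 2) * c n (int n - 2)"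
    using e by (simp add: algebra_simps)
  show ?thesis unfolding r unfolding T_def S_def using e' by (simp add: algebra_simps)
qed

lemma inv: "n \<ge> 1 \<Longrightarrow> int n * T n \<le> (int n + 1) * S n \<and> S n \<le> T n \<and> 0 < S n"
proof (induction n rule: dec_induct)
  case base
  have "T 1 = 1" "S 1 = 1" unfolding T_def S_def by (simp_all add: c_rec c0)
  then show ?case by simp
next
  case (step n)
  let ?T = "T n" and ?S = "S n"
  have h1: "int n * ?T \<le> (int n + 1) * ?S" "?S \<le> ?T" "0 < ?S" using step.IH by auto
  have t: "T (Suc n) = ?T + 2 * ?S" by (rule T_Suc)
  have s: "(int n + 2) * S (Suc n) = (int n + 1) * (2 * ?T + ?S)" by (rule S_Suc)
  have a1: "(int n + 2) * (int (Suc n) * T (Suc n)) \<le> (int n + 2) * ((int (Suc n) + 1) * S (Suc n))"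
  proof -
    have "(int n + 1) * (?T + 2 * ?S) \<le> (int n + 1) * (2 * ?T + ?S)"
      using h1 by (intro mult_left_mono) auto
    then have "(int n + 2) * ((int n + 1) * (?T + 2 * ?S)) \<le> (int n + 2) * ((int n + 2) * S (Suc n))"
      unfolding s by (intro mult_left_mono) auto
    then show ?thesis unfolding t by (simp add: algebra_simps)
  qed
  have A1: "int (Suc n) * T (Suc n) \<le> (int (Suc n) + 1) * S (Suc n)"
    using a1 by (rule mult_left_le_imp_le) auto
  have a2: "(int n + 2) * S (Suc n) \<le> (int n + 2) * T (Suc n)"
    unfolding s t using h1 by (simp add: algebra_simps)
  have A2: "S (Suc n) \<le> T (Suc n)"
    using a2 by (rule mult_left_le_imp_le) auto
  have "0 < (int n + 2) * S (Suc n)" unfolding s using h1 by (intro mult_pos_pos) auto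
  then have A3: "0 < S (Suc n)" by (simp add: zero_less_mult_iff)
  show ?case using A1 A2 A3 by blast
qed

lemma eb_aux: fixes K t s t' s' :: int
  assumes K4: "K\<ge>4" and h: "K*t \<le> (K+1)*s" and s0: "0<s" and s: "(K+2)*s' = (K+1)*(2*t+s)" and t: "t' = t+2*s"
  shows "((K+1)*(K+3)+4)*s' \<le> (K+1)*(K+3)*t'"
proof -
  have h1: "K * t * (K*K+3*K+8) \<le> (K+1) * s * (K*K+3*K+8)"
    using h K4 by (intro mult_right_mono) auto
  have "K*(K*K+6*K+5) - (K+1)*(K*K+3*K+8) = 2*(K-4)*(K+1)" by (simp add: algebra_simps)
  moreover have "2*(K-4)*(K+1) \<ge> 0" using K4 by simp
  ultimately have h2: "(K+1)*(K*K+3*K+8) \<le> K*(K*K+6*K+5)" by linarith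
  have h3: "(K+1)*(K*K+3*K+8) * s \<le> K*(K*K+6*K+5) * s"
    using h2 s0 by (intro mult_right_mono) auto
  have h4: "K * (t * (K*K+3*K+8)) \<le> K * (s * (K*K+6*K+5))"
    using h1 h3 by (simp add: algebra_simps)
  have h5: "t * (K*K+3*K+8) \<le> s * (K*K+6*K+5)"
    using h4 K4 by (simp add: mult_le_cancel_left)
  have e: "(K+2) * (((K+1)*(K+3)+4) * s') = ((K+1)*(K+3)+4) * ((K+1) * (2 * t + s))"
    using s by (metis mult.left_commute)
  have "(K+2) * ((K+1)*(K+3) * t') - (K+2) * (((K+1)*(K+3)+4) * s')
        = (K+1) * (s * (K*K+6*K+5) - t * (K*K+3*K+8))"
    unfolding e t by (simp add: algebra_simps)
  moreover have "(K+1) * (s * (K*K+6*K+5) - t * (K*K+3*K+8)) \<ge> 0"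
    using h5 K4 by simp
  ultimately have "(K+2) * (((K+1)*(K+3)+4) * s') \<le> (K+2) * ((K+1)*(K+3) * t')"
    by linarith
  then show ?thesis using K4 by (simp add: mult_le_cancel_left)
qed

lemma even_bound:
  assumes k: "k \<ge> 4"
  shows "((int k+1)*(int k+3)+4) * S (Suc k) \<le> (int k+1)*(int k+3) * T (Suc k)"
proof -
  have h: "int k * T k \<le> (int k+1) * S k" "0 < S k" using inv[of k] k by auto
  show ?thesis
    by (rule eb_aux[OF _ h(1) h(2) S_Suc T_Suc]) (use k in simp)
qed

lemma ell_T: "int (ell n n) = T n"
proof -
  have "A n (int n) = {v \<in> {0..<n} \<rightarrow>\<^sub>E {0::nat,1,2}. (\<Sum>j<n. v j) = n}"
    unfolding A_def by (simp only: of_nat_eq_iff)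
  then show ?thesis unfolding ell_def T_def c_def by (simp only:)
qed

lemma ell_S: "n \<ge> 1 \<Longrightarrow> int (ell (n-1) n) = S n"
proof -
  assume "n \<ge> 1"
  then have e: "int n - 1 = int (n - 1)" by simp
  have "A n (int (n-1)) = {v \<in> {0..<n} \<rightarrow>\<^sub>E {0::nat,1,2}. (\<Sum>j<n. v j) = n - 1}"
    unfolding A_def by (simp only: of_nat_eq_iff)
  then show ?thesis unfolding ell_def S_def c_def e by (simp only:)
qed


theorem mainTheorem17:
  fixes n :: nat
  assumes "n \<ge> 5"
  shows "(real_of_int (\<lceil>(real n - 1) / 2\<rceil> - \<lfloor>(real n - 1) / 2\<rfloor>)) / real_of_int \<lceil>(real n - 1) / 2\<rceil>
           + real_of_int \<lfloor>(real n + 1) / 2\<rfloor> / real_of_int \<lceil>(real n + 1) / 2\<rceil>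
         \<le> real (ell n n) / real (ell (n - 1) n)
       \<and> real (ell n n) / real (ell (n - 1) n) \<le> (real n + 1) / real n"
proof -
  have n1: "n \<ge> 1" using assms by simp
  define t where "t = real_of_int (T n)"
  define s where "s = real_of_int (S n)"
  have et: "real (ell n n) = t" unfolding t_def using ell_T[of n] by (metis of_int_of_nat_eq)
  have es: "real (ell (n-1) n) = s" unfolding s_def using ell_S[OF n1] by (metis of_int_of_nat_eq)
  have iv: "int n * T n \<le> (int n + 1) * S n" "S n \<le> T n" "0 < S n" using inv[OF n1] by auto
  have h1: "real n * t \<le> (real n + 1) * s" unfolding t_def s_def using iv(1)
    by (metis (mono_tags, opaque_lifting) of_int_le_iff of_int_mult of_int_add of_int_of_nat_eq of_int_1)
  have h2: "s \<le> t" unfolding t_def s_def using iv(2) by simp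
  have h3: "0 < s" unfolding s_def using iv(3) by simp
  have np: "real n > 0" using assms by simp
  have up: "t / s \<le> (real n + 1) / real n"
    using h1 h3 np by (simp add: field_simps)
  have low: "(real_of_int (\<lceil>(real n - 1) / 2\<rceil> - \<lfloor>(real n - 1) / 2\<rfloor>)) / real_of_int \<lceil>(real n - 1) / 2\<rceil>
           + real_of_int \<lfloor>(real n + 1) / 2\<rfloor> / real_of_int \<lceil>(real n + 1) / 2\<rceil> \<le> t / s"
  proof (cases "even n")
    case False
    then obtain m where m: "n = 2*m+1" using oddE by blast
    have r1: "(real n - 1) / 2 = real m" using m by simp
    have r2: "(real n + 1) / 2 = real m + 1" using m by simp
    have m0: "real m + 1 > 0" by simp
    have "1 \<le> t / s" using h2 h3 by simp
    then show ?thesis unfolding r1 r2 using m0 by simp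
  next
    case True
    then obtain m where m: "n = 2*m" using evenE by blast
    have m3: "m \<ge> 3" using m assms by simp
    have f1: "\<lfloor>(real n - 1) / 2\<rfloor> = int m - 1" using m by (simp add: floor_eq_iff)
    have c1: "\<lceil>(real n - 1) / 2\<rceil> = int m" using m by (simp add: ceiling_eq_iff)
    have f2: "\<lfloor>(real n + 1) / 2\<rfloor> = int m" using m by (simp add: floor_eq_iff)
    have c2: "\<lceil>(real n + 1) / 2\<rceil> = int m + 1" using m by (simp add: ceiling_eq_iff)
    have k4: "n - 1 \<ge> 4" using assms by simp
    have eb: "((int (n-1)+1)*(int (n-1)+3)+4) * S (Suc (n-1)) \<le> (int (n-1)+1)*(int (n-1)+3) * T (Suc (n-1))"
      by (rule even_bound[OF k4])
    have sn: "Suc (n-1) = n" using assms by simp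
    have in1: "int (n-1) = 2 * int m - 1" using m m3 by simp
    have eb2: "4 * ((int m * int m + int m + 1) * S n) \<le> 4 * (int m * (int m + 1) * T n)"
      using eb unfolding sn in1 by (simp add: algebra_simps)
    have eb3: "(int m * int m + int m + 1) * S n \<le> int m * (int m + 1) * T n"
      using eb2 by simp
    have eb4: "(real m * real m + real m + 1) * s \<le> real m * (real m + 1) * t"
      unfolding s_def t_def using eb3
      by (metis (mono_tags, opaque_lifting) of_int_le_iff of_int_mult of_int_add of_int_of_nat_eq of_int_1)
    have mp: "real m > 0" using m3 by simp
    have "1 / real m + real m / (real m + 1) = (real m * real m + real m + 1) / (real m * (real m + 1))"
      using mp by (simp add: field_simps)
    also have "\<dots> \<le> t / s"
    proof -
      have B: "real m * (real m + 1) > 0" using mp by simp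
      have "(real m * real m + real m + 1) \<le> (real m * (real m + 1) * t) / s"
        using eb4 h3 by (simp add: pos_le_divide_eq)
      also have "\<dots> = t / s * (real m * (real m + 1))" by simp
      finally show ?thesis using B by (simp add: pos_divide_le_eq)
    qed
    finally have "1 / real m + real m / (real m + 1) \<le> t / s" .
    then show ?thesis unfolding f1 c1 f2 c2 by simp
  qed
  show ?thesis unfolding et es using low up by blast
qed

end
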